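(* The family of recursively enumerable safety constraints is a family with a universal detector, i.e. there is a detector $u$ such that $\{C_u(x):x\in|u|\}$ is exactly the set of recursively enumerable safety constraints.
   Context: Fix a finite nonempty set $N$; $N^+$ the nonempty finite words, $N^{\mathbb N}$ the streams; $s[m{:}]$ the suffix; $n^{-1}\cdot A=\{u:nu\in A\}$; a set of words is prefix-free if no proper prefix (including the empty word) of a member is a member. Let $\mathbf 1=\{\Downarrow\}$. A detector is a set $|a|$ with $a:|a|\to(\mathbf 1+|a|)^N$. The final detector $\omega$ has carrier $\Omega$ = the set of prefix-free subsets of $N^+$, with $\omega(P)(n)=\Downarrow$ if $n\in P$, else $n^{-1}\cdot P$. For $s\in N^{\mathbb N}$, $\mathrm{Join}([s],a)$ maps $(t,y)\in\{s[k{:}]\}\times|a|$ to $\Downarrow$ if $a(y)(t(0))=\Downarrow$, else $(t[1{:}],a(y)(t(0)))$; iterates $g^{(1)}=g$, $g^{(k+1)}(z)=\Downarrow$ if $g^{(k)}(z)=\Downarrow$, else $g(g^{(k)}(z))$. $C_a(x)=\{s:\mathrm{Join}([s],a)^{(k)}(s,x)\ne\Downarrow\ \forall k\ge1\}$. A safety constraint $S$ is recursively enumerable if $S=C_\omega(P)$ for some $P\in\Omega$ that is a recursively enumerable set of words. A family $\mathcal F$ of safety constraints is a family with a universal detector if $\mathcal F=\{C_a(x):x\in|a|\}$ for some detector $a$. *)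

theory Defs
  imports Main "HOL-Library.Sublist" "HOL-Library.Nat_Bijection"
begin

datatype recf = Zr | Sc | Proj nat | Cn recf "recf list" | Pr recf recf | Mn recf

inductive ev :: "recf \<Rightarrow> nat list \<Rightarrow> nat \<Rightarrow> bool" where
  evZ: "ev Zr xs 0"
| evS: "ev Sc (x # xs) (Suc x)"
| evProj: "i < length xs \<Longrightarrow> ev (Proj i) xs (xs ! i)"
| evCn: "length ys = length gs \<Longrightarrow> (\<forall>i < length gs. ev (gs ! i) xs (ys ! i))
          \<Longrightarrow> ev f ys z \<Longrightarrow> ev (Cn f gs) xs z"
| evPr0: "ev f xs y \<Longrightarrow> ev (Pr f g) (0 # xs) y"
| evPrS: "ev (Pr f g) (n # xs) y \<Longrightarrow> ev g (n # y # xs) z \<Longrightarrow> ev (Pr f g) (Suc n # xs) z"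
| evMn: "ev f (n # xs) 0 \<Longrightarrow> (\<forall>m < n. \<exists>v. 0 < v \<and> ev f (m # xs) v) \<Longrightarrow> ev (Mn f) xs n"

definition re_nat :: "nat set \<Rightarrow> bool" where
  "re_nat A \<longleftrightarrow> (\<exists>f. A = {n. \<exists>y. ev f [n] y})"

text \<open>A set of words over the finite alphabet 'a is r.e. iff its image under some
injective coding of letters followed by the standard list coding is r.e.
(the choice of injective letter coding is immaterial).\<close>
definition re_words :: "'a::finite list set \<Rightarrow> bool" where
  "re_words P \<longleftrightarrow> (\<exists>c :: 'a \<Rightarrow> nat. inj c \<and> re_nat ((\<lambda>w. list_encode (map c w)) ` P))"

text \<open>Streams are nat \<Rightarrow> 'a; the value None plays the role of \<Down>.\<close>
definition detector :: "'c set \<Rightarrow> ('c \<Rightarrow> 'a \<Rightarrow> 'c option) \<Rightarrow> bool" where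
  "detector X a \<longleftrightarrow> (\<forall>x\<in>X. \<forall>n. a x n = None \<or> (\<exists>y\<in>X. a x n = Some y))"

definition prefix_free :: "'a list set \<Rightarrow> bool" where
  "prefix_free P \<longleftrightarrow> (\<forall>u\<in>P. \<forall>v\<in>P. \<not> strict_prefix u v)"

definition Omega :: "'a list set set" where
  "Omega = {P. (\<forall>w\<in>P. w \<noteq> []) \<and> prefix_free P}"

definition omega :: "'a list set \<Rightarrow> 'a \<Rightarrow> 'a list set option" where
  "omega P n = (if [n] \<in> P then None else Some {u. n # u \<in> P})"

definition Join :: "('c \<Rightarrow> 'a \<Rightarrow> 'c option) \<Rightarrow> (nat \<Rightarrow> 'a) \<times> 'c \<Rightarrow> ((nat \<Rightarrow> 'a) \<times> 'c) option" where
  "Join a = (\<lambda>(t, y). case a y (t 0) of None \<Rightarrow> None | Some y' \<Rightarrow> Some (\<lambda>m. t (Suc m), y'))"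

text \<open>iter g k = g^(k) for k \<ge> 1 (iter g 0 is the identity, never used).\<close>
fun iter :: "('z \<Rightarrow> 'z option) \<Rightarrow> nat \<Rightarrow> 'z \<Rightarrow> 'z option" where
  "iter g 0 z = Some z"
| "iter g (Suc k) z = (case iter g k z of None \<Rightarrow> None | Some w \<Rightarrow> g w)"

definition C :: "('c \<Rightarrow> 'a \<Rightarrow> 'c option) \<Rightarrow> 'c \<Rightarrow> (nat \<Rightarrow> 'a) set" where
  "C a x = {s. \<forall>k\<ge>1. iter (Join a) k (s, x) \<noteq> None}"

definition re_safety :: "(nat \<Rightarrow> 'a::finite) set \<Rightarrow> bool" where
  "re_safety S \<longleftrightarrow> (\<exists>P\<in>Omega. re_words P \<and> S = C omega P)"

end

theory Submission
  imports Defs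
begin

inductive_cases evZE: "ev Zr xs y"
inductive_cases evSE: "ev Sc xs y"
inductive_cases evProjE: "ev (Proj i) xs y"
inductive_cases evCnE: "ev (Cn f gs) xs y"
inductive_cases evPrE: "ev (Pr f g) xs y"
inductive_cases evMnE: "ev (Mn f) xs y"

lemma ev_det: "ev f xs y \<Longrightarrow> ev f xs y' \<Longrightarrow> y = y'"
proof (induction arbitrary: y' rule: ev.induct)
  case (evZ xs)
  then show ?case by (auto elim: evZE)
next
  case (evS x xs)
  then show ?case by (auto elim: evSE)
next
  case (evProj i xs)
  then show ?case by (auto elim: evProjE)
next
  case (evCn ys gs xs f z)
  from evCn.prems obtain ys' where l: "length ys' = length gs"
    and a: "\<forall>i<length gs. ev (gs ! i) xs (ys' ! i)" and b: "ev f ys' y'"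
    by (auto elim: evCnE)
  have "ys = ys'"
  proof (rule nth_equalityI)
    show "length ys = length ys'" using evCn.hyps(1) l by simp
    fix i assume "i < length ys"
    then have i: "i < length gs" using evCn.hyps(1) by simp
    then have "ev (gs ! i) xs (ys' ! i)" using a by blast
    moreover have "\<forall>y'. ev (gs ! i) xs y' \<longrightarrow> ys ! i = y'" using evCn.IH i by blast
    ultimately show "ys ! i = ys' ! i" by blast
  qed
  then show ?case using evCn.IH(2)[of y'] b by simp
next
  case (evPr0 f xs y g)
  from evPr0.prems show ?case by (rule evPrE) (use evPr0.IH in auto)
next
  case (evPrS f g n xs y z)
  from evPrS.prems obtain y2 where "ev (Pr f g) (n # xs) y2" "ev g (n # y2 # xs) y'"
    by (rule evPrE) auto
  then show ?case using evPrS.IH by metis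
next
  case (evMn f n xs)
  from evMn.prems have a: "ev f (y' # xs) 0" and b: "\<forall>m<y'. \<exists>v. 0 < v \<and> ev f (m # xs) v"
    by (auto elim: evMnE)
  show ?case
  proof (rule ccontr)
    assume "n \<noteq> y'"
    then consider "n < y'" | "y' < n" by linarith
    then show False
    proof cases
      case 1
      then obtain v where "0 < v" "ev f (n # xs) v" using b by blast
      then have "0 = v" using evMn.IH(1) by blast
      then show False using \<open>0 < v\<close> by simp
    next
      case 2
      then obtain v where v: "0 < v" "\<forall>w. ev f (y' # xs) w \<longrightarrow> v = w"
        using evMn.IH(2) by blast
      then have "v = 0" using a by blast
      then show False using v(1) by simp
    qed
  qed
qed

lemma ev_Proj': "i < length xs \<Longrightarrow> xs ! i = y \<Longrightarrow> ev (Proj i) xs y"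
  using evProj[of i xs] by simp

lemma ev_Cn1: "ev g xs y \<Longrightarrow> ev f [y] z \<Longrightarrow> ev (Cn f [g]) xs z"
proof (rule evCn[where ys="[y]"])
  assume a: "ev g xs y" "ev f [y] z"
  show "\<forall>i<length [g]. ev ([g] ! i) xs ([y] ! i)" using a by simp
qed simp_all

lemma ev_Cn2: "ev g1 xs y1 \<Longrightarrow> ev g2 xs y2 \<Longrightarrow> ev f [y1, y2] z \<Longrightarrow> ev (Cn f [g1, g2]) xs z"
proof (rule evCn[where ys="[y1, y2]"])
  assume a: "ev g1 xs y1" "ev g2 xs y2" "ev f [y1, y2] z"
  show "\<forall>i<length [g1, g2]. ev ([g1, g2] ! i) xs ([y1, y2] ! i)"
  proof (intro allI impI)
    fix i assume "i < length [g1, g2]"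
    then have "i = 0 \<or> i = 1" by auto
    then show "ev ([g1, g2] ! i) xs ([y1, y2] ! i)" using a by auto
  qed
qed simp_all

definition addf :: recf where "addf = Pr (Proj 0) (Cn Sc [Proj 1])"

lemma ev_addf: "ev addf [n, x] (n + x)"
proof (induction n)
  case 0
  then show ?case unfolding addf_def using evPr0[OF evProj[of 0 "[x]"]] by simp
next
  case (Suc n)
  have "ev (Cn Sc [Proj 1]) [n, n + x, x] (Suc (n + x))"
    by (rule ev_Cn1[OF ev_Proj' evS]) auto
  then show ?case using evPrS[OF Suc[unfolded addf_def]] unfolding addf_def by simp
qed

definition trif :: recf where "trif = Pr Zr (Cn addf [Proj 1, Cn Sc [Proj 0]])"

lemma ev_trif: "ev trif [n] (triangle n)"
proof (induction n)
  case 0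
  then show ?case unfolding trif_def using evPr0[OF evZ[of "[]"]] by simp
next
  case (Suc n)
  have "ev (Cn addf [Proj 1, Cn Sc [Proj 0]]) [n, triangle n] (triangle n + Suc n)"
    by (rule ev_Cn2[OF ev_Proj' ev_Cn1[OF ev_Proj' evS] ev_addf]) auto
  then show ?case using evPrS[OF Suc[unfolded trif_def]] unfolding trif_def by simp
qed

fun constf :: "nat \<Rightarrow> recf" where
  "constf 0 = Zr"
| "constf (Suc k) = Cn Sc [constf k]"

lemma ev_constf: "ev (constf k) xs k"
proof (induction k)
  case 0 show ?case by (simp add: evZ)
next
  case (Suc k) show ?case using ev_Cn1[OF Suc evS] by simp
qed

definition gf :: "nat \<Rightarrow> recf" where
  "gf k = Cn Sc [Cn addf [Cn trif [Cn addf [constf k, Proj 0]], constf k]]"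

lemma ev_gf: "ev (gf k) [x] (Suc (prod_encode (k, x)))"
proof -
  have 1: "ev (Cn addf [constf k, Proj 0]) [x] (k + x)"
    by (rule ev_Cn2[OF ev_constf ev_Proj' ev_addf]) auto
  have 2: "ev (Cn trif [Cn addf [constf k, Proj 0]]) [x] (triangle (k + x))"
    by (rule ev_Cn1[OF 1 ev_trif])
  have 3: "ev (Cn addf [Cn trif [Cn addf [constf k, Proj 0]], constf k]) [x] (triangle (k + x) + k)"
    by (rule ev_Cn2[OF 2 ev_constf ev_addf])
  show ?thesis unfolding gf_def prod_encode_def using ev_Cn1[OF 3 evS] by simp
qed

lemma dom_Cn_gf: "(\<exists>z. ev (Cn f [gf k]) [x] z) \<longleftrightarrow> (\<exists>z. ev f [Suc (prod_encode (k, x))] z)"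
proof
  assume "\<exists>z. ev (Cn f [gf k]) [x] z"
  then obtain z ys where "length ys = 1" "ev (gf k) [x] (ys ! 0)" "ev f ys z"
    by (auto elim: evCnE)
  moreover then have "ys = [ys ! 0]" by (cases ys) auto
  moreover have "ys ! 0 = Suc (prod_encode (k, x))" using ev_det[OF ev_gf] calculation(2) by metis
  ultimately show "\<exists>z. ev f [Suc (prod_encode (k, x))] z" by metis
next
  assume "\<exists>z. ev f [Suc (prod_encode (k, x))] z"
  then show "\<exists>z. ev (Cn f [gf k]) [x] z" using ev_Cn1[OF ev_gf] by blast
qed

lemma re_words_deriv:
  assumes "re_words P"
  shows "re_words {u. n # u \<in> P}"
proof -
  from assms obtain c :: "'a \<Rightarrow> nat" and f where c: "inj c"
    and f: "(\<lambda>w. list_encode (map c w)) ` P = {m. \<exists>y. ev f [m] y}"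
    unfolding re_words_def re_nat_def by blast
  have "(\<lambda>w. list_encode (map c w)) ` {u. n # u \<in> P} = {x. \<exists>z. ev (Cn f [gf (c n)]) [x] z}"
  proof (rule set_eqI)
    fix x
    have "(\<exists>z. ev (Cn f [gf (c n)]) [x] z) \<longleftrightarrow>
          Suc (prod_encode (c n, x)) \<in> (\<lambda>w. list_encode (map c w)) ` P"
      unfolding dom_Cn_gf f by simp
    also have "\<dots> \<longleftrightarrow> (\<exists>u. n # u \<in> P \<and> x = list_encode (map c u))"
    proof
      assume "Suc (prod_encode (c n, x)) \<in> (\<lambda>w. list_encode (map c w)) ` P"
      then obtain w where w: "w \<in> P" "Suc (prod_encode (c n, x)) = list_encode (map c w)" by blast
      then obtain m u where "w = m # u" by (cases w) auto
      with w c show "\<exists>u. n # u \<in> P \<and> x = list_encode (map c u)"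
        by (auto dest: injD)
    next
      assume "\<exists>u. n # u \<in> P \<and> x = list_encode (map c u)"
      then obtain u where "n # u \<in> P" "x = list_encode (map c u)" by blast
      then show "Suc (prod_encode (c n, x)) \<in> (\<lambda>w. list_encode (map c w)) ` P"
        by (auto intro!: image_eqI[where x="n # u"])
    qed
    finally show "x \<in> (\<lambda>w. list_encode (map c w)) ` {u. n # u \<in> P} \<longleftrightarrow>
        x \<in> {x. \<exists>z. ev (Cn f [gf (c n)]) [x] z}" by auto
  qed
  then show ?thesis unfolding re_words_def re_nat_def using c by blast
qed

lemma Omega_deriv:
  assumes "P \<in> Omega" "[n] \<notin> P"
  shows "{u. n # u \<in> P} \<in> Omega"
proof -
  have "strict_prefix (n # u) (n # v)" if "strict_prefix u v" for u v
    using that by (simp add: strict_prefix_def)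
  then show ?thesis using assms unfolding Omega_def prefix_free_def by blast
qed

theorem mainTheorem19:
  "\<exists>(X :: 'a::finite list set set) u. detector X u \<and>
     {C u x | x. x \<in> X} = {S :: (nat \<Rightarrow> 'a) set. re_safety S}"
proof (intro exI conjI)
  show "detector {P \<in> Omega. re_words P} omega"
    unfolding detector_def omega_def
    using Omega_deriv re_words_deriv by auto
  show "{C omega x | x. x \<in> {P \<in> Omega. re_words (P :: 'a list set)}} = {S. re_safety S}"
    unfolding re_safety_def by auto
qed

end
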